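(* The class of triangle-free graphs is the union of the class of complete bipartite graphs and the class of complements of all graphs $G$ such that $G$ is a connected (claw, bull)-free graph which is neither an expansion of a path of length at least $4$ nor an expansion of a cycle of length at least $6$.
   Context: A claw is a graph isomorphic to $K_{1,3}$. A bull is the graph obtained from a triangle by adding two pendant edges at two different vertices. A graph is (claw, bull)-free if it has no induced subgraph isomorphic to a claw or to a bull. An expansion of a graph $F$ with vertex set $\{v_1,\dots,v_n\}$ is any graph obtained from $F$ by replacing each vertex $v_i$ by a nonempty clique $K^{[i]}$, the cliques being pairwise vertex-disjoint, and adding all edges between $V(K^{[i]})$ and $V(K^{[j]})$ whenever $v_iv_j\in E(F)$ (and no other edges between different cliques). The length of a path is its number of edges. *)

theory Defs
  imports Main
begin

definition sgraph :: "'a set \<Rightarrow> ('a \<Rightarrow> 'a \<Rightarrow> bool) \<Rightarrow> bool" where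
  "sgraph V E \<longleftrightarrow> finite V \<and>
     (\<forall>x y. E x y \<longrightarrow> x \<in> V \<and> y \<in> V \<and> x \<noteq> y) \<and>
     (\<forall>x y. E x y \<longrightarrow> E y x)"

definition complement :: "'a set \<Rightarrow> ('a \<Rightarrow> 'a \<Rightarrow> bool) \<Rightarrow> 'a \<Rightarrow> 'a \<Rightarrow> bool" where
  "complement V E x y \<longleftrightarrow> x \<in> V \<and> y \<in> V \<and> x \<noteq> y \<and> \<not> E x y"

definition triangle_free :: "'a set \<Rightarrow> ('a \<Rightarrow> 'a \<Rightarrow> bool) \<Rightarrow> bool" where
  "triangle_free V E \<longleftrightarrow>
     \<not> (\<exists>a\<in>V. \<exists>b\<in>V. \<exists>c\<in>V. a \<noteq> b \<and> a \<noteq> c \<and> b \<noteq> c \<and> E a b \<and> E b c \<and> E a c)"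

definition complete_bipartite :: "'a set \<Rightarrow> ('a \<Rightarrow> 'a \<Rightarrow> bool) \<Rightarrow> bool" where
  "complete_bipartite V E \<longleftrightarrow> (\<exists>A B. A \<inter> B = {} \<and> A \<union> B = V \<and>
     (\<forall>x\<in>V. \<forall>y\<in>V. E x y \<longleftrightarrow> (x \<in> A \<and> y \<in> B) \<or> (x \<in> B \<and> y \<in> A)))"

definition connected_graph :: "'a set \<Rightarrow> ('a \<Rightarrow> 'a \<Rightarrow> bool) \<Rightarrow> bool" where
  "connected_graph V E \<longleftrightarrow> V \<noteq> {} \<and> (\<forall>x\<in>V. \<forall>y\<in>V. E\<^sup>*\<^sup>* x y)"

definition claw_free :: "'a set \<Rightarrow> ('a \<Rightarrow> 'a \<Rightarrow> bool) \<Rightarrow> bool" where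
  "claw_free V E \<longleftrightarrow> \<not> (\<exists>a\<in>V. \<exists>b\<in>V. \<exists>c\<in>V. \<exists>d\<in>V. distinct [a,b,c,d] \<and>
     E a b \<and> E a c \<and> E a d \<and> \<not> E b c \<and> \<not> E b d \<and> \<not> E c d)"

definition bull_free :: "'a set \<Rightarrow> ('a \<Rightarrow> 'a \<Rightarrow> bool) \<Rightarrow> bool" where
  "bull_free V E \<longleftrightarrow> \<not> (\<exists>a\<in>V. \<exists>b\<in>V. \<exists>c\<in>V. \<exists>d\<in>V. \<exists>e\<in>V. distinct [a,b,c,d,e] \<and>
     E a b \<and> E b c \<and> E a c \<and> E d a \<and> E e b \<and>
     \<not> E d b \<and> \<not> E d c \<and> \<not> E d e \<and> \<not> E e a \<and> \<not> E e c)"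

definition expansion_of ::
  "'a set \<Rightarrow> ('a \<Rightarrow> 'a \<Rightarrow> bool) \<Rightarrow> 'b set \<Rightarrow> ('b \<Rightarrow> 'b \<Rightarrow> bool) \<Rightarrow> bool" where
  "expansion_of V E VF EF \<longleftrightarrow> (\<exists>f. f ` V = VF \<and>
     (\<forall>x\<in>V. \<forall>y\<in>V. x \<noteq> y \<and> f x = f y \<longrightarrow> E x y) \<and>
     (\<forall>x\<in>V. \<forall>y\<in>V. f x \<noteq> f y \<longrightarrow> (E x y \<longleftrightarrow> EF (f x) (f y))))"

text \<open>Path of length k (k edges): vertices 0..k, i ~ i+1.\<close>
definition path_edges :: "nat \<Rightarrow> nat \<Rightarrow> nat \<Rightarrow> bool" where
  "path_edges k i j \<longleftrightarrow> i \<le> k \<and> j \<le> k \<and> (j = i + 1 \<or> i = j + 1)"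

text \<open>Cycle of length k (k \<ge> 3): vertices 0..k-1, i ~ (i+1) mod k.\<close>
definition cycle_edges :: "nat \<Rightarrow> nat \<Rightarrow> nat \<Rightarrow> bool" where
  "cycle_edges k i j \<longleftrightarrow> i < k \<and> j < k \<and> (j = (i + 1) mod k \<or> i = (j + 1) mod k)"

end

theory Submission
  imports Defs
begin


locale cb =
  fixes V :: "'a set" and G :: "'a \<Rightarrow> 'a \<Rightarrow> bool"
  assumes sg: "sgraph V G" and cf: "claw_free V G" and bf: "bull_free V G"
begin

lemma Gsym: "G a b = G b a"
  using sg unfolding sgraph_def by blast

lemma GV1: "G a b \<Longrightarrow> a \<in> V" using sg unfolding sgraph_def by blast
lemma GV2: "G a b \<Longrightarrow> b \<in> V" using sg unfolding sgraph_def by blast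
lemma Girr[simp]: "\<not> G a a" using sg unfolding sgraph_def by blast

lemma claw:
  assumes "G a b" "G a c" "G a d" "\<not> G b c" "\<not> G b d" "\<not> G c d" "b \<noteq> c" "b \<noteq> d" "c \<noteq> d"
  shows False
proof -
  have "a \<noteq> b" "a \<noteq> c" "a \<noteq> d" using assms Girr by (metis (full_types))+
  moreover have "a \<in> V" "b \<in> V" "c \<in> V" "d \<in> V" using assms GV1 GV2 by metis+
  ultimately show False using cf assms unfolding claw_free_def by auto
qed

lemma bull:
  assumes "G a b" "G b c" "G a c" "G d a" "G e b" "\<not> G d b" "\<not> G d c" "\<not> G d e"
     "\<not> G e a" "\<not> G e c"
  shows False
proof -
  have "distinct [a,b,c,d,e]" using assms Girr Gsym by auto
  moreover have "a \<in> V" "b \<in> V" "c \<in> V" "d \<in> V" "e \<in> V" using assms GV1 GV2 by metis+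
  ultimately show False using bf assms unfolding bull_free_def by blast
qed

definition ipath :: "(nat \<Rightarrow> 'a) \<Rightarrow> nat \<Rightarrow> bool" where
  "ipath p L \<longleftrightarrow> (\<forall>i\<le>L. p i \<in> V) \<and> (\<forall>i\<le>L. \<forall>j\<le>L. p i = p j \<longrightarrow> i = j) \<and>
     (\<forall>i\<le>L. \<forall>j\<le>L. G (p i) (p j) \<longleftrightarrow> (i = Suc j \<or> j = Suc i))"

lemma le4_cases: "(i::nat) \<le> 4 \<Longrightarrow> i = 0 \<or> i = 1 \<or> i = 2 \<or> i = 3 \<or> i = 4" by arith

lemma ipath5:
  assumes "distinct [v0,v1,v2,v3,v4]" "G v0 v1" "G v1 v2" "G v2 v3" "G v3 v4"
    "\<not> G v0 v2" "\<not> G v0 v3" "\<not> G v0 v4" "\<not> G v1 v3" "\<not> G v1 v4" "\<not> G v2 v4"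
  shows "\<exists>p. ipath p 4"
proof
  let ?p = "(!) [v0,v1,v2,v3,v4]"
  have V: "v0 \<in> V" "v1 \<in> V" "v2 \<in> V" "v3 \<in> V" "v4 \<in> V" using assms GV1 GV2 by metis+
  show "ipath ?p 4" unfolding ipath_def
  proof (intro conjI allI impI)
    fix i assume "i \<le> (4::nat)" then show "?p i \<in> V" using V by (auto dest!: le4_cases)
  next
    fix i j assume "i \<le> (4::nat)" "j \<le> 4" "?p i = ?p j" then show "i = j"
      using assms(1) by (auto dest!: le4_cases)
  next
    fix i j :: nat assume "i \<le> 4" "j \<le> 4"
    then show "G (?p i) (?p j) \<longleftrightarrow> (i = Suc j \<or> j = Suc i)"
      using le4_cases[OF \<open>i \<le> 4\<close>] le4_cases[OF \<open>j \<le> 4\<close>] assms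
        Gsym[of v1 v0] Gsym[of v2 v0] Gsym[of v3 v0] Gsym[of v4 v0] Gsym[of v2 v1]
        Gsym[of v3 v1] Gsym[of v4 v1] Gsym[of v3 v2] Gsym[of v4 v2] Gsym[of v4 v3]
      by (elim disjE; simp)
  qed
qed

definition walk :: "(nat \<Rightarrow> 'a) \<Rightarrow> nat \<Rightarrow> bool" where
  "walk w n \<longleftrightarrow> (\<forall>i<n. G (w i) (w (Suc i)))"

lemma reach_walk:
  assumes "G\<^sup>*\<^sup>* x y" shows "\<exists>n w. w 0 = x \<and> w n = y \<and> walk w n"
  using assms
proof (induction rule: rtranclp_induct)
  case base
  then show ?case by (rule exI[of _ 0], rule exI[of _ "\<lambda>_. x"]) (simp add: walk_def)
next
  case (step y z)
  then obtain n w where w: "w 0 = x" "w n = y" "walk w n" by blast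
  show ?case
    apply (rule exI[of _ "Suc n"], rule exI[of _ "w(Suc n := z)"])
    using w step(2) by (auto simp: walk_def less_Suc_eq)
qed

lemma min_walk:
  assumes "G\<^sup>*\<^sup>* x y" "y \<in> T"
  shows "\<exists>n w. w 0 = x \<and> w n \<in> T \<and> walk w n \<and> (\<forall>i j. i < j \<and> j \<le> n \<longrightarrow> w i \<noteq> w j) \<and>
     (\<forall>i j. i + 2 \<le> j \<and> j \<le> n \<longrightarrow> \<not> G (w i) (w j)) \<and> (\<forall>i<n. w i \<notin> T) \<and>
     (\<forall>i t. i + 1 < n \<and> t \<in> T \<longrightarrow> \<not> G (w i) t)"
proof -
  define P where "P = (\<lambda>(n, w). w 0 = x \<and> w n \<in> T \<and> walk w n)"
  obtain n0 w0 where "w0 0 = x" "w0 n0 = y" "walk w0 n0" using reach_walk[OF assms(1)] by blast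
  then have "P (n0, w0)" using assms(2) unfolding P_def by auto
  then obtain nw where nw: "P nw" "\<And>nw'. P nw' \<Longrightarrow> fst nw \<le> fst nw'"
    using ex_has_least_nat[of P "(n0, w0)" fst] by blast
  obtain n w where nwd: "nw = (n, w)" by (cases nw)
  have P: "w 0 = x" "w n \<in> T" "walk w n" using nw(1) nwd unfolding P_def by auto
  have minP: "n \<le> n'" if "w' 0 = x" "w' n' \<in> T" "walk w' n'" for n' w'
    using nw(2)[of "(n', w')"] that nwd unfolding P_def by auto
  have d: "w i \<noteq> w j" if "i < j" "j \<le> n" for i j
  proof
    assume eq: "w i = w j"
    define w' where "w' = (\<lambda>t. if t \<le> i then w t else w (t + (j - i)))"
    have "n \<le> n - (j - i)"
    proof (rule minP[of w'])
      show "w' 0 = x" using P by (simp add: w'_def)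
      show "w' (n - (j - i)) \<in> T"
      proof (cases "n - (j - i) \<le> i")
        case True
        then have "j = n" "n - (j - i) = i" using that by arith+
        then show ?thesis using P eq by (simp add: w'_def)
      next
        case False then show ?thesis using P that by (simp add: w'_def)
      qed
      show "walk w' (n - (j - i))" unfolding walk_def
      proof (intro allI impI)
        fix t assume t: "t < n - (j - i)"
        consider "t < i" | "t = i" | "t > i" by arith
        then show "G (w' t) (w' (Suc t))"
        proof cases
          case 1 then show ?thesis using P(3) t that by (auto simp: w'_def walk_def)
        next
          case 2 then show ?thesis using P(3) t that eq unfolding w'_def walk_def
            by auto
        next
          case 3
          have "Suc t + (j - i) = Suc (t + (j - i))" by simp
          then show ?thesis using P(3) t that 3 unfolding w'_def walk_def by auto
        qed
      qed
    qed
    then show False using that by arith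
  qed
  have c: "\<not> G (w i) (w j)" if "i + 2 \<le> j" "j \<le> n" for i j
  proof
    assume eq: "G (w i) (w j)"
    define w' where "w' = (\<lambda>t. if t \<le> i then w t else w (t + (j - i - 1)))"
    have "n \<le> n - (j - i - 1)"
    proof (rule minP[of w'])
      show "w' 0 = x" using P by (simp add: w'_def)
      show "w' (n - (j - i - 1)) \<in> T" using P that by (auto simp: w'_def)
      show "walk w' (n - (j - i - 1))" unfolding walk_def
      proof (intro allI impI)
        fix t assume t: "t < n - (j - i - 1)"
        consider "t < i" | "t = i" | "t > i" by arith
        then show "G (w' t) (w' (Suc t))"
        proof cases
          case 1 then show ?thesis using P(3) t that by (auto simp: w'_def walk_def)
        next
          case 2
          have "Suc i + (j - i - 1) = j" using that by arith
          then show ?thesis using 2 eq unfolding w'_def by auto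
        next
          case 3
          have "Suc t + (j - i - 1) = Suc (t + (j - i - 1))" by simp
          then show ?thesis using P(3) t that 3 unfolding w'_def walk_def by auto
        qed
      qed
    qed
    then show False using that by arith
  qed
  have e: "w i \<notin> T" if "i < n" for i
  proof
    assume "w i \<in> T"
    moreover have "walk w i" using P(3) that by (simp add: walk_def)
    ultimately have "n \<le> i" using minP[of w i] P by auto
    then show False using that by arith
  qed
  have f: "\<not> G (w i) t" if "i + 1 < n" "t \<in> T" for i t
  proof
    assume g: "G (w i) t"
    have "n \<le> Suc i"
      by (rule minP[of "w(Suc i := t)"]) (use P that g in \<open>auto simp: walk_def less_Suc_eq\<close>)
    then show False using that by arith
  qed
  show ?thesis using P d c e f by blast
qed

lemma P5_d2:
  assumes "G a m" "G m b" "\<not> G a b" "a \<noteq> b" "q \<noteq> a" "q \<noteq> m" "q \<noteq> b" "G q a \<or> G q m \<or> G q b"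
    "G q' q" "q' \<noteq> a" "q' \<noteq> m" "q' \<noteq> b" "\<not> G q' a" "\<not> G q' m" "\<not> G q' b"
  shows "\<exists>p. ipath p 4"
proof -
  have ne: "a \<noteq> m" "m \<noteq> b" "a \<noteq> b" "q' \<noteq> q" using assms Girr by (metis (full_types))+
  show ?thesis
  proof (cases "G q a \<and> G q b")
    case True then show ?thesis
      using claw[of q a b q'] assms ne by (auto simp: Gsym)
  next
    case False
    show ?thesis
    proof (cases "G q a"; cases "G q m"; cases "G q b")
    qed (use False assms ne ipath5[of q' q a m b] ipath5[of q' q b m a] bull[of q m a q' b]
         bull[of q m b q' a] claw[of m a b q] in \<open>auto simp: Gsym\<close>)
  qed
qed

lemma P5_d2c:
  assumes "G a m" "G m b" "\<not> G a b" "a \<noteq> b" "c \<noteq> a" "c \<noteq> m" "c \<noteq> b" "G c a \<or> G c m \<or> G c b"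
    "\<not> G c a" "\<not> G c b"
  shows False
  using claw[of m a b c] assms by (auto simp: Gsym)

lemma P5_d3:
  assumes "G a m1" "G m1 m2" "G m2 b" "\<not> G a b" "\<not> G a m2" "\<not> G m1 b" "a \<noteq> b"
    "q \<noteq> a" "q \<noteq> m1" "q \<noteq> m2" "q \<noteq> b" "G q a \<or> G q m1 \<or> G q m2 \<or> G q b"
    "G q' q" "q' \<noteq> a" "q' \<noteq> m1" "q' \<noteq> m2" "q' \<noteq> b"
    "\<not> G q' a" "\<not> G q' m1" "\<not> G q' m2" "\<not> G q' b"
  shows "\<exists>p. ipath p 4"
proof -
  have ne: "a \<noteq> m1" "m1 \<noteq> m2" "m2 \<noteq> b" "a \<noteq> m2" "a \<noteq> b" "m1 \<noteq> b" "q' \<noteq> q"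
    using assms Girr by (metis (full_types))+
  show ?thesis
  proof (cases "G q a \<and> G q m2 \<or> G q a \<and> G q b \<or> G q m1 \<and> G q b")
    case True then show ?thesis
      using claw[of q a m2 q'] claw[of q a b q'] claw[of q m1 b q'] assms ne by (auto simp: Gsym)
  next
    case False
    show ?thesis
    proof (cases "G q a"; cases "G q m1"; cases "G q m2"; cases "G q b")
    qed (use False assms ne ipath5[of q' q a m1 m2] ipath5[of q' q b m2 m1] claw[of m1 a m2 q]
        claw[of m2 m1 b q] bull[of q m1 a q' m2] bull[of m1 m2 q a b] bull[of q m2 b q' m1]
        in \<open>auto simp: Gsym\<close>)
  qed
qed

lemma P5_d3c:
  assumes "G a m1" "G m1 m2" "G m2 b" "\<not> G a b" "\<not> G a m2" "\<not> G m1 b" "a \<noteq> b"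
    "c \<noteq> a" "c \<noteq> m1" "c \<noteq> m2" "c \<noteq> b" "G c a \<or> G c m1 \<or> G c m2 \<or> G c b"
    "\<not> G c a" "\<not> G c b"
  shows False
proof -
  have ne: "a \<noteq> m1" "m1 \<noteq> m2" "m2 \<noteq> b" "a \<noteq> m2" "a \<noteq> b" "m1 \<noteq> b"
    using assms Girr by (metis (full_types))+
  show ?thesis
    using claw[of m1 a m2 c] claw[of m2 m1 b c] bull[of m1 m2 c a b] assms ne by (auto simp: Gsym)
qed

lemma walkV: assumes "w 0 \<in> V" "walk w n" "i \<le> n" shows "w i \<in> V"
proof (cases "i < n")
  case True then show ?thesis using assms GV1 unfolding walk_def by blast
next
  case False
  then have i: "i = n" using assms by arith
  show ?thesis
  proof (cases n)
    case 0 then show ?thesis using assms i by simp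
  next
    case (Suc k) then show ?thesis using assms(2) GV2 i unfolding walk_def by auto
  qed
qed

lemma near_set:
  assumes conn: "\<And>x y. x \<in> V \<Longrightarrow> y \<in> V \<Longrightarrow> G\<^sup>*\<^sup>* x y"
    and "c \<in> V" "c \<notin> W" "t0 \<in> W" "W \<subseteq> V"
  obtains q where "q \<notin> W" "\<exists>t\<in>W. G q t" "q = c"
  | q q' where "q \<notin> W" "\<exists>t\<in>W. G q t" "G q' q" "q' \<notin> W" "\<forall>t\<in>W. \<not> G q' t"
proof -
  obtain nu u where u: "u 0 = c" "u nu \<in> W" "walk u nu" "\<forall>i<nu. u i \<notin> W"
     "\<forall>i t. i + 1 < nu \<and> t \<in> W \<longrightarrow> \<not> G (u i) t"
    using min_walk[of c t0 W] conn assms by blast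
  have "nu \<noteq> 0"
  proof
    assume "nu = 0" then show False using u(1,2) assms(3) by simp
  qed
  then have n1: "nu - 1 < nu" "Suc (nu - 1) = nu" by arith+
  have q: "u (nu - 1) \<notin> W" "\<exists>t\<in>W. G (u (nu - 1)) t"
  proof -
    show "u (nu - 1) \<notin> W" using u(4) n1 by blast
    have "G (u (nu - 1)) (u (Suc (nu - 1)))" using u(3) n1 unfolding walk_def by blast
    then show "\<exists>t\<in>W. G (u (nu - 1)) t" using u(2) n1 by auto
  qed
  show ?thesis
  proof (cases "nu = 1")
    case True then show ?thesis using that(1)[of "u (nu - 1)"] q u by auto
  next
    case False
    then have a: "nu - 2 < nu" "Suc (nu - 2) = nu - 1" "nu - 2 + 1 < nu" using \<open>nu \<noteq> 0\<close> by arith+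
    have "G (u (nu - 2)) (u (Suc (nu - 2)))" using u(3) a unfolding walk_def by blast
    then have "G (u (nu - 2)) (u (nu - 1))" using a by simp
    moreover have "u (nu - 2) \<notin> W" using u(4) a by blast
    moreover have "\<forall>t\<in>W. \<not> G (u (nu - 2)) t" using u(5) a by blast
    ultimately show ?thesis using that(2)[of "u (nu - 1)" "u (nu - 2)"] q by blast
  qed
qed


lemma exists_P5:
  assumes conn: "\<And>x y. x \<in> V \<Longrightarrow> y \<in> V \<Longrightarrow> G\<^sup>*\<^sup>* x y"
    and V: "a \<in> V" "b \<in> V" "c \<in> V" and ne: "a \<noteq> b" "a \<noteq> c" "b \<noteq> c"
    and ng: "\<not> G a b" "\<not> G a c" "\<not> G b c"
  shows "\<exists>p. ipath p 4"
proof -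
  obtain n w where w: "w 0 = a" "w n \<in> {b}" "walk w n" "\<forall>i j. i < j \<and> j \<le> n \<longrightarrow> w i \<noteq> w j"
     "\<forall>i j. i + 2 \<le> j \<and> j \<le> n \<longrightarrow> \<not> G (w i) (w j)"
    using min_walk[OF conn[OF V(1) V(2)], of "{b}"] by auto
  have edge: "G (w i) (w (Suc i))" if "i < n" for i using w(3) that unfolding walk_def by blast
  have edge': "G (w i) (w (i + 1))" if "i < n" for i using edge that by simp
  have dist: "w i \<noteq> w j" if "i < j" "j \<le> n" for i j using w(4) that by blast
  have chord: "\<not> G (w i) (w j)" if "i + 2 \<le> j" "j \<le> n" for i j using w(5) that by blast
  have wV: "w i \<in> V" if "i \<le> n" for i using walkV[of w n i] w V that by auto
  have "n \<noteq> 0" using w ne by auto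
  moreover have "n \<noteq> 1" using w ng edge[of 0] by auto
  ultimately consider "4 \<le> n" | "n = 2" | "n = 3" by arith
  then show ?thesis
  proof cases
    case 1
    show ?thesis
      apply (rule ipath5[of "w 0" "w 1" "w 2" "w 3" "w 4"])
      using 1 edge'[of 0] edge'[of 1] edge'[of 2] edge'[of 3] chord[of 0 2] chord[of 0 3] chord[of 0 4]
        chord[of 1 3] chord[of 1 4] chord[of 2 4] dist[of 0 1] dist[of 0 2] dist[of 0 3] dist[of 0 4]
        dist[of 1 2] dist[of 1 3] dist[of 1 4] dist[of 2 3] dist[of 2 4] dist[of 3 4]
      by (auto simp: numeral_eq_Suc)
  next
    case 2
    define m where "m = w 1"
    have b: "b = w 2" using w 2 by simp
    have f: "G a m" "G m b" "a \<noteq> m" "m \<noteq> b" using edge[of 0] edge[of 1] dist[of 0 1] dist[of 1 2] 2 w(1)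
      unfolding m_def b by (auto simp: numeral_eq_Suc)
    have cm: "c \<noteq> m" using f ng by auto
    have mV: "m \<in> V" using f GV1 by blast
    show ?thesis
    proof (rule near_set[OF conn V(3), of "{a, m, b}" a])
      fix q assume "q \<notin> {a, m, b}" "\<exists>t\<in>{a, m, b}. G q t" "q = c"
      note q = this
      show ?thesis apply (rule FalseE, rule P5_d2c[of a m b c]) using q f ng ne by (auto simp: Gsym)
    next
      fix q q' assume "q \<notin> {a, m, b}" "\<exists>t\<in>{a, m, b}. G q t" "G q' q" "q' \<notin> {a, m, b}"
        "\<forall>t\<in>{a, m, b}. \<not> G q' t"
      note q = this
      show ?thesis apply (rule P5_d2[of a m b q q']) using q f ng ne by (auto simp: Gsym)
    qed (use cm ne V mV in auto)
  next
    case 3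
    define m1 where "m1 = w 1"
    define m2 where "m2 = w 2"
    have b: "b = w 3" using w 3 by simp
    have f: "G a m1" "G m1 m2" "G m2 b" "a \<noteq> m1" "m1 \<noteq> m2" "m2 \<noteq> b" "\<not> G a m2" "\<not> G m1 b"
      using edge[of 0] edge[of 1] edge[of 2] dist[of 0 1] dist[of 1 2] dist[of 2 3] chord[of 0 2]
        chord[of 1 3] 3 w(1)
      unfolding m1_def m2_def b by (auto simp: numeral_eq_Suc)
    have cm: "c \<noteq> m1" "c \<noteq> m2" using f ng by (auto simp: Gsym)
    have mV: "m1 \<in> V" "m2 \<in> V" using f GV1 by blast+
    show ?thesis
    proof (rule near_set[OF conn V(3), of "{a, m1, m2, b}" a])
      fix q assume "q \<notin> {a, m1, m2, b}" "\<exists>t\<in>{a, m1, m2, b}. G q t" "q = c"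
      note q = this
      show ?thesis apply (rule FalseE, rule P5_d3c[of a m1 m2 b c]) using q f ng ne by (auto simp: Gsym)
    next
      fix q q' assume "q \<notin> {a, m1, m2, b}" "\<exists>t\<in>{a, m1, m2, b}. G q t" "G q' q"
        "q' \<notin> {a, m1, m2, b}" "\<forall>t\<in>{a, m1, m2, b}. \<not> G q' t"
      note q = this
      show ?thesis apply (rule P5_d3[of a m1 m2 b q q']) using q f ng ne by (auto simp: Gsym)
    qed (use cm ne V mV in auto)
  qed
qed

end


locale mp = cb +
  fixes p :: "nat \<Rightarrow> 'a" and L :: nat
  assumes ip: "ipath p L" and L4: "4 \<le> L" and mx: "\<And>q L'. ipath q L' \<Longrightarrow> L' \<le> L"
begin

lemma pV: "i \<le> L \<Longrightarrow> p i \<in> V" using ip unfolding ipath_def by blast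
lemma padj[simp]: "i \<le> L \<Longrightarrow> j \<le> L \<Longrightarrow> G (p i) (p j) \<longleftrightarrow> (i = Suc j \<or> j = Suc i)"
  using ip unfolding ipath_def by blast
lemma peq[simp]: "i \<le> L \<Longrightarrow> j \<le> L \<Longrightarrow> p i = p j \<longleftrightarrow> i = j"
  using ip unfolding ipath_def by blast

definition cl :: "nat \<Rightarrow> nat \<Rightarrow> bool" where
  "cl m i \<longleftrightarrow> (if m \<le> L then i \<le> m + 1 \<and> m \<le> i + 1 else i = 0 \<or> i = L)"

lemma classify:
  assumes xV: "x \<in> V" and xP: "\<forall>i\<le>L. x \<noteq> p i" and ex: "\<exists>i\<le>L. G (p i) x"
  shows "\<exists>m\<le>L+1. \<forall>i\<le>L. G (p i) x \<longleftrightarrow> cl m i"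
proof -
  define N where "N i \<longleftrightarrow> i \<le> L \<and> G (p i) x" for i
  have xne: "x \<noteq> p i" "p i \<noteq> x" if "i \<le> L" for i using xP that by auto
  have F1: "N (i - 1) \<or> N (i + 1)" if "0 < i" "i < L" "N i" for i
  proof (rule ccontr)
    assume a: "\<not> (N (i - 1) \<or> N (i + 1))"
    show False by (rule claw[of "p i" "p (i - 1)" "p (i + 1)" x]) (use a that xne[of "i - 1"] xne[of "i + 1"] in \<open>auto simp: N_def Gsym[of x]\<close>)
  qed
  have F2: "N (i - 1) \<or> N (i + 2)" if "1 \<le> i" "i + 2 \<le> L" "N i" "N (i + 1)" for i
  proof (rule ccontr)
    assume a: "\<not> (N (i - 1) \<or> N (i + 2))"
    show False by (rule bull[of "p i" "p (i + 1)" x "p (i - 1)" "p (i + 2)"]) (use a that in \<open>auto simp: N_def Gsym[of x]\<close>)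
  qed
  have F3: False if "1 \<le> i" "i + 3 \<le> L" "N i" "N (i + 1)" "N (i + 2)" "N (i + 3)" "\<not> N (i - 1)" for i
    by (rule bull[of "p i" x "p (i + 1)" "p (i - 1)" "p (i + 3)"]) (use that in \<open>auto simp: N_def Gsym[of x]\<close>)
  have F3': False if "i + 4 \<le> L" "N i" "N (i + 1)" "N (i + 2)" "N (i + 3)" "\<not> N (i + 4)" for i
    by (rule bull[of "p (i + 3)" x "p (i + 2)" "p (i + 4)" "p i"]) (use that in \<open>auto simp: N_def Gsym[of x]\<close>)
  have F4: False if "N i" "N j" "N l" "i + 2 \<le> j" "j + 2 \<le> l" for i j l
    by (rule claw[of x "p i" "p j" "p l"]) (use that in \<open>auto simp: N_def Gsym[of x]\<close>)
  have F5: False if "N 0" "\<forall>i. 1 \<le> i \<longrightarrow> \<not> N i"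
  proof -
    define q where "q i = (if i = 0 then x else p (i - 1))" for i
    have "ipath q (Suc L)" unfolding ipath_def
    proof (intro conjI allI impI)
      fix i assume "i \<le> Suc L" then show "q i \<in> V" using xV pV by (auto simp: q_def)
    next
      fix i j assume ij: "i \<le> Suc L" "j \<le> Suc L" "q i = q j"
      have "i - 1 \<le> L" "j - 1 \<le> L" using ij by arith+
      then show "i = j"
        using xne[of "i - 1"] xne[of "j - 1"] ij by (auto simp: q_def split: if_splits)
    next
      fix i j assume ij: "i \<le> Suc L" "j \<le> Suc L"
      show "G (q i) (q j) \<longleftrightarrow> (i = Suc j \<or> j = Suc i)"
      proof (cases "i = 0"; cases "j = 0")
        assume a: "i = 0" "j \<noteq> 0"
        have "N (j - 1) \<longleftrightarrow> j - 1 = 0" using that ij a by (cases "j - 1 = 0") auto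
        then show ?thesis using a ij by (auto simp: q_def N_def Gsym[of x])
      next
        assume a: "i \<noteq> 0" "j = 0"
        have "N (i - 1) \<longleftrightarrow> i - 1 = 0" using that ij a by (cases "i - 1 = 0") auto
        then show ?thesis using a ij by (auto simp: q_def N_def Gsym[of x])
      next
        assume "i \<noteq> 0" "j \<noteq> 0"
        then show ?thesis using ij by (auto simp: q_def)
      qed (simp add: q_def)
    qed
    then show False using mx by fastforce
  qed
  have F5': False if "N L" "\<forall>i<L. \<not> N i"
  proof -
    define q where "q i = (if i = Suc L then x else p i)" for i
    have "ipath q (Suc L)" unfolding ipath_def
    proof (intro conjI allI impI)
      fix i assume "i \<le> Suc L" then show "q i \<in> V" using xV pV by (auto simp: q_def)
    next
      fix i j assume "i \<le> Suc L" "j \<le> Suc L" "q i = q j" then show "i = j"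
        using xne by (auto simp: q_def le_Suc_eq split: if_splits)
    next
      fix i j assume ij: "i \<le> Suc L" "j \<le> Suc L"
      show "G (q i) (q j) \<longleftrightarrow> (i = Suc j \<or> j = Suc i)"
      proof (cases "i = Suc L"; cases "j = Suc L")
        assume a: "i = Suc L" "j \<noteq> Suc L"
        have "N j \<longleftrightarrow> j = L" using that ij a by (cases "j = L") auto
        then show ?thesis using a ij by (auto simp: q_def N_def Gsym[of x])
      next
        assume a: "i \<noteq> Suc L" "j = Suc L"
        have "N i \<longleftrightarrow> i = L" using that ij a by (cases "i = L") auto
        then show ?thesis using a ij by (auto simp: q_def N_def Gsym[of x])
      next
        assume "i \<noteq> Suc L" "j \<noteq> Suc L"
        then show ?thesis using ij by (auto simp: q_def)
      qed (simp add: q_def)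
    qed
    then show False using mx by fastforce
  qed
  have NL: "i \<le> L" if "N i" for i using that N_def by auto
  have goal: "\<exists>m\<le>L+1. \<forall>i. N i \<longleftrightarrow> i \<le> L \<and> cl m i"
  proof (cases "\<exists>i. N i \<and> N (i + 1)")
    case False
    have Nb: "i = 0 \<or> i = L" if "N i" for i
    proof (rule ccontr)
      assume "\<not> (i = 0 \<or> i = L)"
      then have "0 < i" "i < L" using NL[OF that] by auto
      from F1[OF this that] show False using False that
        by (metis Suc_diff_1 Suc_eq_plus1 \<open>0 < i\<close>)
    qed
    from ex obtain i0 where "N i0" unfolding N_def by blast
    show ?thesis
    proof (cases "N 0 \<and> N L")
      case True
      show ?thesis
        by (rule exI[of _ "L + 1"]) (use True Nb NL in \<open>auto simp: cl_def\<close>)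
    next
      case c2: False
      show ?thesis
      proof (cases "N 0")
        case True then show ?thesis using F5 Nb c2 L4
          by (metis One_nat_def not_one_le_zero)
      next
        case False
        then have "N L" using Nb \<open>N i0\<close> by metis
        then show ?thesis using F5' Nb False L4 by (metis less_irrefl)
      qed
    qed
  next
    case True
    then obtain i where i: "N i" "N (i + 1)" by blast
    have iL: "i + 1 \<le> L" using NL[OF i(2)] .
    have "(\<exists>m. 1 \<le> m \<and> m + 1 \<le> L \<and> N (m - 1) \<and> N m \<and> N (m + 1)) \<or> (N 0 \<and> N 1 \<and> \<not> N 2)
       \<or> (N (L - 1) \<and> N L \<and> \<not> N (L - 2))"
    proof (cases "1 \<le> i \<and> i + 2 \<le> L")
      case True
      from F2[OF True[THEN conjunct1] True[THEN conjunct2] i]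
      show ?thesis
      proof
        assume "N (i - 1)" then show ?thesis using i True by (intro disjI1 exI[of _ i]) auto
      next
        assume "N (i + 2)" then show ?thesis using i True
          by (intro disjI1 exI[of _ "i + 1"]) (auto simp: add.commute)
      qed
    next
      case False
      then have "i = 0 \<or> i + 1 = L" using iL by arith
      then show ?thesis
      proof
        assume i0: "i = 0"
        show ?thesis
        proof (cases "N 2")
          case True then show ?thesis using i i0 L4 by (intro disjI1 exI[of _ 1]) (auto simp: numeral_2_eq_2)
        next
          case False then show ?thesis using i i0 by (intro disjI2 disjI1) auto
        qed
      next
        assume iL': "i + 1 = L"
        show ?thesis
        proof (cases "N (L - 2)")
          case True
          have "L - 1 - 1 = L - 2" "L - 1 + 1 = L" "i = L - 1" using L4 iL' by arith+
          then show ?thesis using i True L4 by (intro disjI1 exI[of _ "L - 1"]) auto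
        next
          case False
          have "i = L - 1" using iL' by arith
          then show ?thesis using i False iL' by (intro disjI2) auto
        qed
      qed
    qed
    then show ?thesis
    proof (elim disjE exE conjE)
      fix m assume m: "1 \<le> m" "m + 1 \<le> L" "N (m - 1)" "N m" "N (m + 1)"
      have "N j \<longleftrightarrow> j \<le> L \<and> cl m j" for j
      proof
        assume Nj: "N j"
        have "j \<le> m + 1 \<and> m \<le> j + 1"
        proof (rule ccontr)
          assume "\<not> (j \<le> m + 1 \<and> m \<le> j + 1)"
          then consider "m + 3 \<le> j" | "j + 3 \<le> m" | "j = m + 2" | "j + 2 = m" by arith
          then show False
          proof cases
            case 1 show False by (rule F4[of "m - 1" "m + 1" j]) (use 1 m Nj in auto)
          next
            case 2 show False by (rule F4[of j "m - 1" "m + 1"]) (use 2 m Nj in auto)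
          next
            case 3
            show False
            proof (cases "m + 3 \<le> L")
              case True
              have "N (m + 3)"
                using F3'[of "m - 1"] m Nj 3 True by (cases "N (m + 3)") (auto simp: add.commute)
              show False by (rule F4[of "m - 1" "m + 1" "m + 3"]) (use \<open>N (m + 3)\<close> m in auto)
            next
              case False
              then have "m + 2 = L" using NL[OF Nj] 3 by arith
              have e: "m - 1 + 1 = m" "m - 1 + 2 = m + 1" "m - 1 + 3 = m + 2" "m - 1 - 1 = m - 2" "1 \<le> m - 1"
                using \<open>m + 2 = L\<close> L4 by arith+
              have "N (m - 2)"
              proof (rule ccontr)
                assume "\<not> N (m - 2)"
                then show False using F3[of "m - 1"] m Nj 3 e \<open>m + 2 = L\<close> by simp
              qed
              show False by (rule F4[of "m - 2" m "m + 2"]) (use \<open>N (m - 2)\<close> m Nj 3 L4 e \<open>m + 2 = L\<close> in auto)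
            qed
          next
            case 4
            show False
            proof (cases "2 \<le> m - 1")
              case True
              have e: "m - 2 + 1 = m - 1" "m - 2 + 2 = m" "m - 2 + 3 = m + 1" "m - 2 - 1 = m - 3"
                using True by arith+
              have "N (m - 3)" using F3[of "m - 2"] m Nj 4 True e
                by (cases "N (m - 3)") auto
              show False by (rule F4[of "m - 3" "m - 1" "m + 1"]) (use \<open>N (m - 3)\<close> m True in auto)
            next
              case False
              then have m2: "m = 2" "j = 0" using 4 by arith+
              have n: "N 0" "N 1" "N 2" "N 3" using m Nj m2 by simp_all
              have "N 4" using F3'[of 0] n n[unfolded numeral_2_eq_2] L4 by (cases "N 4") simp_all
              show False by (rule F4[of 0 2 4]) (use \<open>N 4\<close> m Nj m2 in auto)
            qed
          qed
        qed
        then show "j \<le> L \<and> cl m j" using NL[OF Nj] m by (auto simp: cl_def)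
      next
        assume "j \<le> L \<and> cl m j"
        then have "j = m - 1 \<or> j = m \<or> j = m + 1" using m by (auto simp: cl_def split: if_splits)
        then show "N j" using m by auto
      qed
      then show ?thesis using m by (intro exI[of _ m]) auto
    next
      assume b: "N 0" "N 1" "\<not> N 2"
      have "N j \<longleftrightarrow> j \<le> L \<and> cl 0 j" for j
      proof
        assume Nj: "N j"
        have bull4: False if "N j'" "4 \<le> j'" for j'
          by (rule bull[of "p 1" x "p 0" "p 2" "p j'"]) (use b that in \<open>auto simp: N_def Gsym[of x]\<close>)
        have "j \<le> 1"
        proof (rule ccontr)
          assume "\<not> j \<le> 1"
          then consider "j = 2" | "j = 3" | "4 \<le> j" by arith
          then show False
          proof cases
            case 1 then show False using b Nj by simp
          next
            case 2 then have "N 2 \<or> N 4" using F1[of 3] Nj L4 by auto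
            then show False using b bull4 by auto
          next
            case 3 then show False using bull4 Nj by auto
          qed
        qed
        then show "j \<le> L \<and> cl 0 j" using L4 by (auto simp: cl_def)
      next
        assume "j \<le> L \<and> cl 0 j"
        then have "j = 0 \<or> j = 1" by (auto simp: cl_def)
        then show "N j" using b by auto
      qed
      then show ?thesis by (intro exI[of _ 0]) auto
    next
      assume b: "N (L - 1)" "N L" "\<not> N (L - 2)"
      have e: "L - 1 = Suc (L - 2)" "L = Suc (L - 1)" using L4 by arith+
      have "N j \<longleftrightarrow> j \<le> L \<and> cl L j" for j
      proof
        assume Nj: "N j"
        have bull4: False if "N j'" "j' + 4 \<le> L" for j'
          by (rule bull[of "p (L - 1)" x "p L" "p (L - 2)" "p j'"]) (use b that e in \<open>auto simp: N_def Gsym[of x]\<close>)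
        have "L - 1 \<le> j"
        proof (rule ccontr)
          assume "\<not> L - 1 \<le> j"
          then consider "j = L - 2" | "j = L - 3" | "j + 4 \<le> L" using NL[OF Nj] by arith
          then show False
          proof cases
            case 1 then show False using b Nj by simp
          next
            case 2
            have "L - 3 - 1 = L - 4" "L - 3 + 1 = L - 2" using L4 by arith+
            then have "N (L - 4) \<or> N (L - 2)" using F1[of "L - 3"] Nj L4 2 by auto
            then show False using b bull4[of "L - 4"] L4 by auto
          next
            case 3 then show False using bull4 Nj by auto
          qed
        qed
        then show "j \<le> L \<and> cl L j" using NL[OF Nj] by (auto simp: cl_def)
      next
        assume "j \<le> L \<and> cl L j"
        then have "j = L - 1 \<or> j = L" by (auto simp: cl_def)
        then show "N j" using b by auto
      qed
      then show ?thesis by (intro exI[of _ L]) auto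
    qed
  qed
  then show ?thesis unfolding N_def by blast
qed

definition tp :: "'a \<Rightarrow> nat \<Rightarrow> bool" where
  "tp x m \<longleftrightarrow> m \<le> L + 1 \<and> (\<forall>i\<le>L. G (p i) x \<longleftrightarrow> cl m i)"

lemma tp_simps:
  assumes "tp x m" "i \<le> L"
  shows "G (p i) x \<longleftrightarrow> cl m i" "G x (p i) \<longleftrightarrow> cl m i"
  using assms Gsym unfolding tp_def by blast+

lemma has_nbr:
  assumes conn: "\<And>x y. x \<in> V \<Longrightarrow> y \<in> V \<Longrightarrow> G\<^sup>*\<^sup>* x y" and xV: "x \<in> V"
  shows "(\<exists>i\<le>L. x = p i) \<or> (\<exists>i\<le>L. G (p i) x)"
proof -
  have "G\<^sup>*\<^sup>* (p 0) x" using conn pV xV by simp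
  then show ?thesis
  proof (induction rule: rtranclp_induct)
    case base then show ?case by auto
  next
    case (step y z)
    show ?case
    proof (rule ccontr)
      assume nz: "\<not> ((\<exists>i\<le>L. z = p i) \<or> (\<exists>i\<le>L. G (p i) z))"
      then have zne: "z \<noteq> p i" "p i \<noteq> z" "\<not> G (p i) z" "\<not> G z (p i)" if "i \<le> L" for i
        using that Gsym by blast+
      show False
      proof (cases "\<exists>i\<le>L. y = p i")
        case True then show False using step(2) nz by auto
      next
        case False
        then have "\<exists>i\<le>L. G (p i) y" using step(3) by blast
        moreover have "y \<in> V" using step(2) GV1 by blast
        ultimately obtain m where m: "m \<le> L + 1" "\<forall>i\<le>L. G (p i) y \<longleftrightarrow> cl m i"
          using classify False by blast
        then have t: "tp y m" unfolding tp_def by blast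
        note ts = tp_simps[OF t]
        have yz: "G y z" "G z y" using step(2) Gsym by blast+
        consider "m = 0" | "0 < m" "m < L" | "m = L" | "m = L + 1" using m by arith
        then show False
        proof cases
          case 1
          show False
            by (rule bull[of y "p 1" "p 0" z "p 2"]) (use 1 L4 yz zne ts in \<open>auto simp: cl_def\<close>)
        next
          case 2
          show False
            by (rule claw[of y "p (m - 1)" "p (m + 1)" z]) (use 2 L4 yz zne ts in \<open>auto simp: cl_def\<close>)
        next
          case 3
          have e: "L - 1 = Suc (L - 2)" "L = Suc (L - 1)" using L4 by arith+
          show False
            by (rule bull[of y "p (L - 1)" "p L" z "p (L - 2)"]) (use 3 L4 e yz zne ts in \<open>auto simp: cl_def\<close>)
        next
          case 4
          show False
            by (rule claw[of y "p 0" "p L" z]) (use 4 L4 yz zne ts in \<open>auto simp: cl_def\<close>)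
        qed
      qed
    qed
  qed
qed

definition adj :: "nat \<Rightarrow> nat \<Rightarrow> bool" where
  "adj a b \<longleftrightarrow> (a \<le> b + 1 \<and> b \<le> a + 1) \<or> (a = L + 1 \<and> b = 0) \<or> (a = 0 \<and> b = L + 1)"

lemma pair_le:
  assumes xV: "x \<in> V" and yV: "y \<in> V" and xy: "x \<noteq> y"
    and xP: "\<forall>i\<le>L. x \<noteq> p i" and yP: "\<forall>i\<le>L. y \<noteq> p i"
    and tx: "tp x m" and ty: "tp y m'" and le: "m \<le> m'"
  shows "G x y \<longleftrightarrow> adj m m'"
proof -
  note hx = tp_simps[OF tx] and hy = tp_simps[OF ty]
  have xne: "x \<noteq> p i" "p i \<noteq> x" "y \<noteq> p i" "p i \<noteq> y" if "i \<le> L" for i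
    using xP yP that by auto
  have yx: "y \<noteq> x" using xy by auto
  have bd: "m \<le> L + 1" "m' \<le> L + 1" using tx ty unfolding tp_def by auto
  consider (A1) "m' = L + 1" "m = L + 1" | (D) "m' = L + 1" "m \<le> L" | (A) "m' \<le> L" "m = m'"
    | (B) "m' \<le> L" "m' = m + 1" | (C) "m' \<le> L" "m + 2 \<le> m'" using bd le by arith
  then show ?thesis
  proof cases
    case A1
    have "G x y"
    proof (rule ccontr)
      assume n: "\<not> G x y"
      then have n': "\<not> G y x" using Gsym by blast
      show False
        by (rule claw[of "p 0" x y "p 1"]) (use A1 n n' xy yx xne hx hy L4 in \<open>auto simp: cl_def\<close>)
    qed
    then show ?thesis using A1 by (simp add: adj_def)
  next
    case A
    have "G x y"
    proof (rule ccontr)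
      assume n: "\<not> G x y"
      then have n': "\<not> G y x" using Gsym by blast
      show False
      proof (cases "m + 2 \<le> L")
        case True
        show False by (rule claw[of "p (m + 1)" x y "p (m + 2)"])
          (use A True n n' xy yx xne hx hy L4 in \<open>auto simp: cl_def\<close>)
      next
        case False
        have e: "m - 1 = Suc (m - 2)" "m = Suc (m - 1)" using False L4 A by arith+
        show False by (rule claw[of "p (m - 1)" x y "p (m - 2)"])
          (use A False e n n' xy yx xne hx hy L4 in \<open>auto simp: cl_def\<close>)
      qed
    qed
    then show ?thesis using A by (simp add: adj_def)
  next
    case B
    have "G x y"
    proof (rule ccontr)
      assume n: "\<not> G x y"
      then have n': "\<not> G y x" using Gsym by blast
      show False
      proof (cases "2 \<le> m")
        case True
        have e: "m - 1 = Suc (m - 2)" "m = Suc (m - 1)" using True by arith+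
        show False by (rule bull[of "p m" "p (m - 1)" x y "p (m - 2)"])
          (use B True e n n' xy yx xne hx hy L4 in \<open>auto simp: cl_def\<close>)
      next
        case False
        show False by (rule bull[of "p (m + 1)" "p (m + 2)" y x "p (m + 3)"])
          (use B False n n' xy yx xne hx hy L4 in \<open>auto simp: cl_def\<close>)
      qed
    qed
    then show ?thesis using B by (simp add: adj_def)
  next
    case C
    have "\<not> G x y"
    proof
      assume g: "G x y"
      then have g': "G y x" using Gsym by blast
      consider (B1) "m' + 2 \<le> L" | (B2) "2 \<le> m" | (C1) "m' < L" "m + 3 \<le> m'" | (C2) "0 < m" "m + 3 \<le> m'"
        | (E1) "m = 1" "m' = 3" "L \<le> 4" | (E2) "m = 0" "m' = L" using C L4 by arith
      then show False
      proof cases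
        case B1
        show False by (rule bull[of y "p (m' + 1)" "p m'" x "p (m' + 2)"])
          (use C B1 g g' xy yx xne hx hy L4 in \<open>auto simp: cl_def\<close>)
      next
        case B2
        have e: "m - 1 = Suc (m - 2)" "m = Suc (m - 1)" using B2 by arith+
        show False by (rule bull[of x "p (m - 1)" "p m" y "p (m - 2)"])
          (use C B2 e g g' xy yx xne hx hy L4 in \<open>auto simp: cl_def\<close>)
      next
        case C1
        have e: "m' = Suc (m' - 1)" using C1 by arith
        show False by (rule claw[of y x "p (m' - 1)" "p (m' + 1)"])
          (use C C1 e g g' xy yx xne hx hy L4 in \<open>auto simp: cl_def\<close>)
      next
        case C2
        have e: "m = Suc (m - 1)" using C2 by arith
        show False by (rule claw[of x y "p (m - 1)" "p (m + 1)"])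
          (use C C2 e g g' xy yx xne hx hy L4 in \<open>auto simp: cl_def\<close>)
      next
        case E1
        show False by (rule bull[of x y "p 2" "p 0" "p 4"])
          (use C E1 g g' xy yx xne hx[unfolded cl_def] hy[unfolded cl_def] L4 in auto)
      next
        case E2
        show False by (rule bull[of x "p 1" "p 0" y "p 2"])
          (use C E2 g g' xy yx xne hx hy L4 in \<open>auto simp: cl_def\<close>)
      qed
    qed
    then show ?thesis using C by (auto simp: adj_def)
  next
    case D
    consider (D0) "m = 0" | (DL) "m = L" | (Dm) "2 \<le> m" "m + 2 \<le> L" | (D1) "m = 1" | (DL1) "m = L - 1"
      using D L4 by arith
    then show ?thesis
    proof cases
      case D0
      have "G x y"
      proof (rule ccontr)
        assume n: "\<not> G x y"
        then have n': "\<not> G y x" using Gsym by blast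
        show False by (rule bull[of "p 0" "p 1" x y "p 2"])
          (use D D0 n n' xy yx xne hx hy L4 in \<open>auto simp: cl_def\<close>)
      qed
      then show ?thesis using D D0 by (simp add: adj_def)
    next
      case DL
      have "G x y"
      proof (rule ccontr)
        assume n: "\<not> G x y"
        then have n': "\<not> G y x" using Gsym by blast
        have e: "L - 1 = Suc (L - 2)" "L = Suc (L - 1)" using L4 by arith+
        show False by (rule bull[of "p L" "p (L - 1)" x y "p (L - 2)"])
          (use D DL e n n' xy yx xne hx hy L4 in \<open>auto simp: cl_def\<close>)
      qed
      then show ?thesis using D DL by (simp add: adj_def)
    next
      case Dm
      have "\<not> G x y"
      proof
        assume g: "G x y"
        then have g': "G y x" using Gsym by blast
        show False by (rule claw[of y x "p 0" "p L"])
          (use D Dm g g' xy yx xne hx hy L4 in \<open>auto simp: cl_def\<close>)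
      qed
      then show ?thesis using D Dm by (auto simp: adj_def)
    next
      case D1
      have "\<not> G x y"
      proof
        assume g: "G x y"
        then have g': "G y x" using Gsym by blast
        show False by (rule bull[of y x "p 0" "p L" "p 2"])
          (use D D1 g g' xy yx xne hx hy L4 in \<open>auto simp: cl_def\<close>)
      qed
      then show ?thesis using D D1 L4 by (auto simp: adj_def)
    next
      case DL1
      have "\<not> G x y"
      proof
        assume g: "G x y"
        then have g': "G y x" using Gsym by blast
        have e: "L - 1 = Suc (L - 2)" "L = Suc (L - 1)" using L4 by arith+
        show False by (rule bull[of y x "p L" "p 0" "p (L - 2)"])
          (use D DL1 e g g' xy yx xne hx hy L4 in \<open>auto simp: cl_def\<close>)
      qed
      then show ?thesis using D DL1 L4 by (auto simp: adj_def)
    qed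
  qed
qed

lemma cl_adj: "i \<le> L \<Longrightarrow> m \<le> L + 1 \<Longrightarrow> cl m i \<longleftrightarrow> adj i m"
  by (auto simp: cl_def adj_def)

lemma adj_sym: "adj a b \<longleftrightarrow> adj b a" by (auto simp: adj_def)

lemma mod_succ: "a \<le> L + 1 \<Longrightarrow> (a + 1) mod (L + 2) = (if a = L + 1 then 0 else a + 1)"
  by auto

lemma final:
  assumes conn: "\<And>x y. x \<in> V \<Longrightarrow> y \<in> V \<Longrightarrow> G\<^sup>*\<^sup>* x y"
  shows "(\<exists>k\<ge>4. expansion_of V G {0..k} (path_edges k)) \<or>
         (\<exists>k\<ge>6. expansion_of V G {..<k} (cycle_edges k))"
proof -
  define pr where "pr v m \<longleftrightarrow> (if (\<exists>i\<le>L. v = p i) then m \<le> L \<and> v = p m else tp v m)" for v m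
  have ex: "\<exists>m. pr v m" if vV: "v \<in> V" for v
  proof (cases "\<exists>i\<le>L. v = p i")
    case True then show ?thesis unfolding pr_def by auto
  next
    case False
    then have "\<exists>i\<le>L. G (p i) v" using has_nbr[OF conn vV] by blast
    then obtain m where "m \<le> L + 1" "\<forall>i\<le>L. G (p i) v \<longleftrightarrow> cl m i"
      using classify[OF vV] False by blast
    then show ?thesis using False unfolding pr_def tp_def by auto
  qed
  define f where "f v = (SOME m. pr v m)" for v
  have fpr: "pr v (f v)" if "v \<in> V" for v unfolding f_def using ex[OF that] by (rule someI_ex)
  have fp: "f (p i) = i" if "i \<le> L" for i
  proof -
    have "\<exists>ia\<le>L. p i = p ia" using that by blast
    then have "f (p i) \<le> L" "p i = p (f (p i))" using fpr[OF pV[OF that]] unfolding pr_def by auto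
    then show ?thesis using that peq by metis
  qed
  have fb: "f v \<le> L + 1" if "v \<in> V" for v
    using fpr[OF that] unfolding pr_def tp_def by (auto split: if_splits)
  have gen: "G v w \<longleftrightarrow> adj (f v) (f w)" if "v \<in> V" "w \<in> V" "v \<noteq> w" for v w
  proof (cases "\<exists>i\<le>L. v = p i"; cases "\<exists>i\<le>L. w = p i")
    assume "\<exists>i\<le>L. v = p i" "\<exists>i\<le>L. w = p i"
    then obtain i j where ij: "i \<le> L" "j \<le> L" "v = p i" "w = p j" by blast
    then show ?thesis using fp that by (auto simp: adj_def)
  next
    assume a: "\<exists>i\<le>L. v = p i" "\<not> (\<exists>i\<le>L. w = p i)"
    then obtain i where i: "i \<le> L" "v = p i" by blast
    have "tp w (f w)" using fpr[OF that(2)] a unfolding pr_def by auto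
    then show ?thesis using i fp tp_simps cl_adj fb that by auto
  next
    assume a: "\<not> (\<exists>i\<le>L. v = p i)" "\<exists>i\<le>L. w = p i"
    then obtain i where i: "i \<le> L" "w = p i" by blast
    have "tp v (f v)" using fpr[OF that(1)] a unfolding pr_def by auto
    then show ?thesis using i fp tp_simps cl_adj fb that adj_sym by auto
  next
    assume a: "\<not> (\<exists>i\<le>L. v = p i)" "\<not> (\<exists>i\<le>L. w = p i)"
    have t: "tp v (f v)" "tp w (f w)" using fpr that a unfolding pr_def by auto
    show ?thesis
    proof (cases "f v \<le> f w")
      case True then show ?thesis using pair_le[OF that _ _ t] a by auto
    next
      case False
      then have "f w \<le> f v" by arith
      then show ?thesis using pair_le[of w v "f w" "f v"] that a t Gsym adj_sym by auto
    qed
  qed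
  show ?thesis
  proof (cases "\<exists>v\<in>V. f v = L + 1")
    case False
    then have fL: "f v \<le> L" if "v \<in> V" for v using fb[OF that] that by force
    have "expansion_of V G {0..L} (path_edges L)" unfolding expansion_of_def
    proof (intro exI[of _ f] conjI ballI impI)
      show "f ` V = {0..L}"
      proof
        show "f ` V \<subseteq> {0..L}" using fL by auto
        show "{0..L} \<subseteq> f ` V"
        proof
          fix i assume "i \<in> {0..L}"
          then have "i \<le> L" by simp
          then show "i \<in> f ` V" using fp pV by (metis imageI)
        qed
      qed
    next
      fix x y assume "x \<in> V" "y \<in> V" "x \<noteq> y \<and> f x = f y"
      then show "G x y" using gen by (auto simp: adj_def)
    next
      fix x y assume xy: "x \<in> V" "y \<in> V" "f x \<noteq> f y"
      then have "x \<noteq> y" by auto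
      then show "G x y \<longleftrightarrow> path_edges L (f x) (f y)"
        using gen[OF xy(1,2)] fL[OF xy(1)] fL[OF xy(2)] xy(3) by (auto simp: adj_def path_edges_def)
    qed
    then show ?thesis using L4 by blast
  next
    case True
    have "expansion_of V G {..<L+2} (cycle_edges (L+2))" unfolding expansion_of_def
    proof (intro exI[of _ f] conjI ballI impI)
      show "f ` V = {..<L+2}"
      proof
        show "f ` V \<subseteq> {..<L+2}" using fb by fastforce
        show "{..<L+2} \<subseteq> f ` V"
        proof
          fix i assume "i \<in> {..<L+2}"
          then have "i \<le> L \<or> i = L + 1" by auto
          then show "i \<in> f ` V" using fp pV True by (metis imageI)
        qed
      qed
    next
      fix x y assume "x \<in> V" "y \<in> V" "x \<noteq> y \<and> f x = f y"
      then show "G x y" using gen by (auto simp: adj_def)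
    next
      fix x y assume xy: "x \<in> V" "y \<in> V" "f x \<noteq> f y"
      then have "x \<noteq> y" by auto
      then show "G x y \<longleftrightarrow> cycle_edges (L+2) (f x) (f y)"
        using gen[OF xy(1,2)] fb[OF xy(1)] fb[OF xy(2)] xy(3) mod_succ[OF fb[OF xy(1)]]
          mod_succ[OF fb[OF xy(2)]]
        by (auto simp: adj_def cycle_edges_def)
    qed
    then show ?thesis using L4 by (intro disjI2 exI[of _ "L + 2"]) auto
  qed
qed

end



context cb begin

lemma ipath_bound: assumes "ipath q L'" shows "L' + 1 \<le> card V"
proof -
  have inj: "inj_on q {0..L'}" using assms unfolding ipath_def inj_on_def by auto
  have sub: "q ` {0..L'} \<subseteq> V" using assms unfolding ipath_def by auto
  have fin: "finite V" using sg unfolding sgraph_def by blast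
  have "card (q ` {0..L'}) = L' + 1" using card_image[OF inj] by simp
  then show ?thesis using card_mono[OF fin sub] by simp
qed

theorem cb_structure:
  assumes conn: "connected_graph V G"
    and V: "a \<in> V" "b \<in> V" "c \<in> V" and ne: "a \<noteq> b" "a \<noteq> c" "b \<noteq> c"
    and ng: "\<not> G a b" "\<not> G a c" "\<not> G b c"
  shows "(\<exists>k\<ge>4. expansion_of V G {0..k} (path_edges k)) \<or>
         (\<exists>k\<ge>6. expansion_of V G {..<k} (cycle_edges k))"
proof -
  have cn: "\<And>x y. x \<in> V \<Longrightarrow> y \<in> V \<Longrightarrow> G\<^sup>*\<^sup>* x y" using conn unfolding connected_graph_def by blast
  obtain p4 where "ipath p4 4" using exists_P5[OF cn V ne ng] by blast
  then have P4: "\<exists>q. ipath q 4" by blast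
  have bd: "\<forall>y. (\<exists>q. ipath q y) \<longrightarrow> y \<le> card V" using ipath_bound by fastforce
  obtain L where L: "\<exists>q. ipath q L" "\<And>L'. (\<exists>q. ipath q L') \<Longrightarrow> L' \<le> L"
    using Nat.ex_has_greatest_nat[of "\<lambda>L'. \<exists>q. ipath q L'", OF P4 bd] by blast
  obtain p where p: "ipath p L" using L(1) by blast
  have L4: "4 \<le> L" using L(2) P4 by blast
  interpret mp V G p L
    by unfold_locales (use p L4 L(2) in auto)
  show ?thesis using final[OF cn] .
qed

end

lemma sg_compl: "sgraph V E \<Longrightarrow> sgraph V (complement V E)"
  unfolding sgraph_def complement_def by blast

theorem corollary1:
  fixes V :: "'a set" and E :: "'a \<Rightarrow> 'a \<Rightarrow> bool"
  assumes "sgraph V E"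
  shows "triangle_free V E \<longleftrightarrow>
           complete_bipartite V E \<or>
           (connected_graph V (complement V E) \<and>
            claw_free V (complement V E) \<and>
            bull_free V (complement V E) \<and>
            \<not> (\<exists>k\<ge>4. expansion_of V (complement V E) {0..k} (path_edges k)) \<and>
            \<not> (\<exists>k\<ge>6. expansion_of V (complement V E) {..<k} (cycle_edges k)))"
proof -
  define H where "H = complement V E"
  have sgE: "sgraph V E" using assms .
  have Esym: "E x y \<Longrightarrow> E y x" for x y using sgE unfolding sgraph_def by blast
  have EV: "E x y \<Longrightarrow> x \<in> V \<and> y \<in> V \<and> x \<noteq> y" for x y using sgE unfolding sgraph_def by blast
  have Hdef: "H x y \<longleftrightarrow> x \<in> V \<and> y \<in> V \<and> x \<noteq> y \<and> \<not> E x y" for x y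
    unfolding H_def complement_def by blast
  have tri: False if "triangle_free V E" "a \<in> V" "b \<in> V" "c \<in> V" "a \<noteq> b" "a \<noteq> c" "b \<noteq> c"
    "\<not> H a b" "\<not> H a c" "\<not> H b c" for a b c
  proof -
    have "E a b" "E b c" "E a c" using that Hdef by auto
    then show False using that unfolding triangle_free_def by blast
  qed
  show ?thesis unfolding H_def[symmetric]
  proof
    assume T: "triangle_free V E"
    have cf: "claw_free V H" unfolding claw_free_def
    proof (intro notI, elim bexE conjE)
      fix a b c d assume "a \<in> V" "b \<in> V" "c \<in> V" "d \<in> V" "distinct [a, b, c, d]"
        "\<not> H b c" "\<not> H b d" "\<not> H c d"
      then show False using tri[OF T, of b c d] by auto
    qed
    have bf: "bull_free V H" unfolding bull_free_def
    proof (intro notI, elim bexE conjE)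
      fix a b c d e assume "a \<in> V" "b \<in> V" "c \<in> V" "d \<in> V" "e \<in> V" "distinct [a, b, c, d, e]"
        "\<not> H d c" "\<not> H d e" "\<not> H e c"
      then show False using tri[OF T, of d e c] Hdef by auto
    qed
    have np: "\<not> (\<exists>k\<ge>4. expansion_of V H {0..k} (path_edges k))"
    proof
      assume "\<exists>k\<ge>4. expansion_of V H {0..k} (path_edges k)"
      then obtain k where k0: "4 \<le> k" and ex: "expansion_of V H {0..k} (path_edges k)" by blast
      from ex obtain f where f1: "f ` V = {0..k}"
        and f3: "\<forall>x\<in>V. \<forall>y\<in>V. f x \<noteq> f y \<longrightarrow> (H x y \<longleftrightarrow> path_edges k (f x) (f y))"
        unfolding expansion_of_def by blast
      have k: "4 \<le> k" "f ` V = {0..k}"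
        "\<And>x y. x \<in> V \<Longrightarrow> y \<in> V \<Longrightarrow> f x \<noteq> f y \<Longrightarrow> H x y \<longleftrightarrow> path_edges k (f x) (f y)"
        using k0 f1 f3 by auto
      have "0 \<in> f ` V" using f1 k0 by simp
      then obtain u0 where u0: "u0 \<in> V" "f u0 = 0" by (auto simp: image_iff)
      have "2 \<in> f ` V" using f1 k0 by simp
      then obtain u2 where u2: "u2 \<in> V" "f u2 = 2" by (auto simp: image_iff)
      have "4 \<in> f ` V" using f1 k0 by simp
      then obtain u4 where u4: "u4 \<in> V" "f u4 = 4" by (auto simp: image_iff)
      note u = u0(1) u2(1) u4(1) u0(2) u2(2) u4(2)
      have h: "\<not> H u0 u2" "\<not> H u0 u4" "\<not> H u2 u4"
        using k(3)[OF u(1,2)] k(3)[OF u(1,3)] k(3)[OF u(2,3)] u(4-6) by (simp_all add: path_edges_def)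
      have d: "u0 \<noteq> u2" "u0 \<noteq> u4" "u2 \<noteq> u4" using u(4-6) by auto
      show False by (rule tri[OF T u(1-3) d h])
    qed
    have nc: "\<not> (\<exists>k\<ge>6. expansion_of V H {..<k} (cycle_edges k))"
    proof
      assume "\<exists>k\<ge>6. expansion_of V H {..<k} (cycle_edges k)"
      then obtain k where k0: "6 \<le> k" and ex: "expansion_of V H {..<k} (cycle_edges k)" by blast
      from ex obtain f where f1: "f ` V = {..<k}"
        and f3: "\<forall>x\<in>V. \<forall>y\<in>V. f x \<noteq> f y \<longrightarrow> (H x y \<longleftrightarrow> cycle_edges k (f x) (f y))"
        unfolding expansion_of_def by blast
      have k: "6 \<le> k" "f ` V = {..<k}"
        "\<And>x y. x \<in> V \<Longrightarrow> y \<in> V \<Longrightarrow> f x \<noteq> f y \<Longrightarrow> H x y \<longleftrightarrow> cycle_edges k (f x) (f y)"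
        using k0 f1 f3 by auto
      have "0 \<in> f ` V" using f1 k0 by simp
      then obtain u0 where u0: "u0 \<in> V" "f u0 = 0" by (auto simp: image_iff)
      have "2 \<in> f ` V" using f1 k0 by simp
      then obtain u2 where u2: "u2 \<in> V" "f u2 = 2" by (auto simp: image_iff)
      have "4 \<in> f ` V" using f1 k0 by simp
      then obtain u4 where u4: "u4 \<in> V" "f u4 = 4" by (auto simp: image_iff)
      note u = u0(1) u2(1) u4(1) u0(2) u2(2) u4(2)
      have m: "(0 + 1) mod k = 1" "(2 + 1) mod k = 3" "(4 + 1) mod k = 5" using k(1) by auto
      have h: "\<not> H u0 u2" "\<not> H u0 u4" "\<not> H u2 u4"
        using k(3)[OF u(1,2)] k(3)[OF u(1,3)] k(3)[OF u(2,3)] u(4-6) m k(1)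
        by (simp_all add: cycle_edges_def)
      have d: "u0 \<noteq> u2" "u0 \<noteq> u4" "u2 \<noteq> u4" using u(4-6) by auto
      show False by (rule tri[OF T u(1-3) d h])
    qed
    show "complete_bipartite V E \<or> (connected_graph V H \<and> claw_free V H \<and> bull_free V H \<and>
        \<not> (\<exists>k\<ge>4. expansion_of V H {0..k} (path_edges k)) \<and>
        \<not> (\<exists>k\<ge>6. expansion_of V H {..<k} (cycle_edges k)))"
    proof (cases "connected_graph V H")
      case True then show ?thesis using cf bf np nc by blast
    next
      case False
      show ?thesis
      proof (rule disjI1)
        show "complete_bipartite V E"
        proof (cases "V = {}")
          case True then show ?thesis unfolding complete_bipartite_def by auto
        next
          case ne: False
          then obtain x y where xy: "x \<in> V" "y \<in> V" "\<not> H\<^sup>*\<^sup>* x y"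
            using False unfolding connected_graph_def by blast
          define A where "A = {v \<in> V. H\<^sup>*\<^sup>* x v}"
          define B where "B = V - A"
          have xA: "x \<in> A" using xy A_def by auto
          have yB: "y \<in> B" using xy A_def B_def by auto
          have AB: "\<not> H u v" if "u \<in> A" "v \<in> B" for u v
          proof
            assume "H u v"
            then have "H\<^sup>*\<^sup>* x v" using that A_def by auto
            then show False using that A_def B_def by auto
          qed
          have Hs: "H u v \<Longrightarrow> H v u" for u v using Hdef Esym by blast
          have EAB: "E u v" if "u \<in> A" "v \<in> B" for u v
            using AB[OF that] that A_def B_def Hdef by auto
          have EAB': "E v u" if "u \<in> A" "v \<in> B" for u v using EAB[OF that] Esym by blast
          have d1: "A \<inter> B = {}" using A_def B_def by auto
          have d2: "A \<union> B = V" using A_def B_def by auto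
          have d3: "\<forall>u\<in>V. \<forall>v\<in>V. E u v \<longleftrightarrow> u \<in> A \<and> v \<in> B \<or> u \<in> B \<and> v \<in> A"
          proof (intro ballI)
            fix u v assume uv: "u \<in> V" "v \<in> V"
            show "E u v \<longleftrightarrow> u \<in> A \<and> v \<in> B \<or> u \<in> B \<and> v \<in> A"
            proof
              assume e: "E u v"
              show "u \<in> A \<and> v \<in> B \<or> u \<in> B \<and> v \<in> A"
              proof (rule ccontr)
                assume "\<not> (u \<in> A \<and> v \<in> B \<or> u \<in> B \<and> v \<in> A)"
                then have "u \<in> A \<and> v \<in> A \<or> u \<in> B \<and> v \<in> B" using uv A_def B_def by auto
                then show False
                proof
                  assume a: "u \<in> A \<and> v \<in> A"
                  have "E u y" "E v y" using EAB a yB by auto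
                  moreover have "u \<noteq> y" "v \<noteq> y" using a yB B_def by auto
                  moreover have "u \<noteq> v" using EV[OF e] by blast
                  ultimately have "\<exists>a\<in>V. \<exists>b\<in>V. \<exists>c\<in>V. a \<noteq> b \<and> a \<noteq> c \<and> b \<noteq> c \<and> E a b \<and> E b c \<and> E a c"
                    using e uv xy(2) Esym by (intro bexI[of _ u] bexI[of _ v] bexI[of _ y]) auto
                  then show False using T unfolding triangle_free_def by blast
                next
                  assume a: "u \<in> B \<and> v \<in> B"
                  have "E x u" "E x v" using EAB a xA by auto
                  moreover have "u \<noteq> x" "v \<noteq> x" using a xA B_def by auto
                  moreover have "u \<noteq> v" using EV[OF e] by blast
                  ultimately have "\<exists>a\<in>V. \<exists>b\<in>V. \<exists>c\<in>V. a \<noteq> b \<and> a \<noteq> c \<and> b \<noteq> c \<and> E a b \<and> E b c \<and> E a c"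
                    using e uv xy(1) Esym by (intro bexI[of _ u] bexI[of _ v] bexI[of _ x]) auto
                  then show False using T unfolding triangle_free_def by blast
                qed
              qed
            next
              assume "u \<in> A \<and> v \<in> B \<or> u \<in> B \<and> v \<in> A"
              then show "E u v" using EAB EAB' by auto
            qed
          qed
          show ?thesis unfolding complete_bipartite_def using d1 d2 d3 by blast
        qed
      qed
    qed
  next
    assume R: "complete_bipartite V E \<or> (connected_graph V H \<and> claw_free V H \<and> bull_free V H \<and>
        \<not> (\<exists>k\<ge>4. expansion_of V H {0..k} (path_edges k)) \<and>
        \<not> (\<exists>k\<ge>6. expansion_of V H {..<k} (cycle_edges k)))"
    show "triangle_free V E"
    proof (cases "complete_bipartite V E")
      case True
      then obtain A B where AB: "A \<inter> B = {}" "A \<union> B = V"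
        "\<forall>x\<in>V. \<forall>y\<in>V. E x y \<longleftrightarrow> (x \<in> A \<and> y \<in> B) \<or> (x \<in> B \<and> y \<in> A)"
        unfolding complete_bipartite_def by blast
      show ?thesis unfolding triangle_free_def
      proof (intro notI, elim bexE conjE)
        fix a b c assume abc: "a \<in> V" "b \<in> V" "c \<in> V" "E a b" "E b c" "E a c"
        have "a \<in> A \<and> b \<in> B \<or> a \<in> B \<and> b \<in> A" using AB(3) abc by blast
        moreover have "b \<in> A \<and> c \<in> B \<or> b \<in> B \<and> c \<in> A" using AB(3) abc by blast
        moreover have "a \<in> A \<and> c \<in> B \<or> a \<in> B \<and> c \<in> A" using AB(3) abc by blast
        ultimately show False using AB(1) by blast
      qed
    next
      case False
      then have R: "connected_graph V H" "claw_free V H" "bull_free V H"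
        "\<not> (\<exists>k\<ge>4. expansion_of V H {0..k} (path_edges k))"
        "\<not> (\<exists>k\<ge>6. expansion_of V H {..<k} (cycle_edges k))" using R by auto
      interpret cb V H using sg_compl[OF sgE] R(2,3) unfolding H_def by unfold_locales auto
      show ?thesis unfolding triangle_free_def
      proof (intro notI, elim bexE conjE)
        fix a b c assume abc: "a \<in> V" "b \<in> V" "c \<in> V" "a \<noteq> b" "a \<noteq> c" "b \<noteq> c"
          "E a b" "E b c" "E a c"
        then have "\<not> H a b" "\<not> H a c" "\<not> H b c" using Hdef by auto
        then show False using cb_structure[OF R(1) abc(1-6)] R(4,5) by blast
      qed
    qed
  qed
qed

end
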